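(* There exist constants $c_1,c_2>0$ and $N$ such that for every $n\ge N$ and every integer $k$ with $c_1<k<\frac{1}{3}n-c_2$, the pair $(n,k)$ is not good; that is, there is an $n$-vertex graph all of whose minimum $k$-spanners have girth at most $k+1$.
   Context: All graphs are undirected and unweighted. For a graph $G=(V,E)$ and integer $k$, a $k$-spanner of $G$ is a subgraph $H=(V,E')$, $E'\subseteq E$, with $\mathrm{dist}_H(u,v)\le k\cdot\mathrm{dist}_G(u,v)$ for all $u,v\in V$. A minimum $k$-spanner is a $k$-spanner with the fewest edges. Girth = length of a shortest cycle ($+\infty$ if acyclic). A pair $(n,k)$ is good if for every $n$-vertex graph at least one of its minimum $k$-spanners has girth at least $k+2$. *)

theory Defs
  imports Complex_Main "HOL-Library.Extended_Nat"
begin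

definition is_graph :: "nat \<Rightarrow> nat set set \<Rightarrow> bool" where
  "is_graph n E \<longleftrightarrow> E \<subseteq> {{u, v} | u v. u < n \<and> v < n \<and> u \<noteq> v}"

definition is_walk :: "nat set set \<Rightarrow> nat list \<Rightarrow> bool" where
  "is_walk E xs \<longleftrightarrow> xs \<noteq> [] \<and> (\<forall>i. Suc i < length xs \<longrightarrow> {xs ! i, xs ! Suc i} \<in> E)"

definition dist :: "nat set set \<Rightarrow> nat \<Rightarrow> nat \<Rightarrow> enat" where
  "dist E u v = (INF xs \<in> {xs. is_walk E xs \<and> hd xs = u \<and> last xs = v}. enat (length xs - 1))"

definition is_spanner :: "nat \<Rightarrow> nat \<Rightarrow> nat set set \<Rightarrow> nat set set \<Rightarrow> bool" where
  "is_spanner n k E H \<longleftrightarrow> H \<subseteq> E \<and>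
     (\<forall>u < n. \<forall>v < n. dist H u v \<le> enat k * dist E u v)"

definition is_min_spanner :: "nat \<Rightarrow> nat \<Rightarrow> nat set set \<Rightarrow> nat set set \<Rightarrow> bool" where
  "is_min_spanner n k E H \<longleftrightarrow> is_spanner n k E H \<and>
     (\<forall>H'. is_spanner n k E H' \<longrightarrow> card H \<le> card H')"

definition is_cycle :: "nat set set \<Rightarrow> nat list \<Rightarrow> bool" where
  "is_cycle E xs \<longleftrightarrow> distinct xs \<and> length xs \<ge> 3 \<and>
     (\<forall>i < length xs. {xs ! i, xs ! ((i + 1) mod length xs)} \<in> E)"

text \<open>Girth (infinite for acyclic graphs, since Inf {} = \<infinity> in enat).\<close>
definition girth :: "nat set set \<Rightarrow> enat" where
  "girth E = (INF xs \<in> {xs. is_cycle E xs}. enat (length xs))"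

definition good :: "nat \<Rightarrow> nat \<Rightarrow> bool" where
  "good n k \<longleftrightarrow> (\<forall>E. is_graph n E \<longrightarrow>
     (\<exists>H. is_min_spanner n k E H \<and> girth H \<ge> enat (k + 2)))"

end

theory Submission
  imports Defs
begin


lemma walk_single[simp]: "is_walk E [x]"
  unfolding is_walk_def by auto

lemma walk_Cons2: "is_walk E (x # y # xs) \<longleftrightarrow> {x,y} \<in> E \<and> is_walk E (y # xs)"
  unfolding is_walk_def
proof safe
  fix i assume h: "\<forall>i. Suc i < length (x # y # xs) \<longrightarrow> {(x # y # xs) ! i, (x # y # xs) ! Suc i} \<in> E"
  show "{x,y} \<in> E" using h[rule_format, of 0] by simp
  assume "Suc i < length (y # xs)"
  then show "{(y # xs) ! i, (y # xs) ! Suc i} \<in> E" using h[rule_format, of "Suc i"] by simp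
next
  fix i assume "{x,y} \<in> E" "\<forall>i. Suc i < length (y # xs) \<longrightarrow> {(y # xs) ! i, (y # xs) ! Suc i} \<in> E"
    "Suc i < length (x # y # xs)"
  then show "{(x # y # xs) ! i, (x # y # xs) ! Suc i} \<in> E"
    by (cases i) auto
qed

lemma walk_Cons_tl: "is_walk E (x # xs) \<Longrightarrow> xs \<noteq> [] \<Longrightarrow> is_walk E xs"
  by (cases xs) (auto simp: walk_Cons2)

lemma walk_nonempty: "is_walk E xs \<Longrightarrow> xs \<noteq> []"
  unfolding is_walk_def by auto

lemma walk_append:
  "is_walk E xs \<Longrightarrow> is_walk E ys \<Longrightarrow> last xs = hd ys \<Longrightarrow> is_walk E (xs @ tl ys)"
proof (induction xs rule: induct_list012)
  case 1 then show ?case by (simp add: is_walk_def)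
next
  case (2 x) then show ?case by (cases ys) auto
next
  case (3 x y zs)
  then have "is_walk E (y # zs @ tl ys)" by (simp add: walk_Cons2)
  then show ?case using 3 by (simp add: walk_Cons2)
qed

lemma walk_snoc: "is_walk E (xs @ [y, z]) \<longleftrightarrow> is_walk E (xs @ [y]) \<and> {y,z} \<in> E"
proof (induction xs rule: induct_list012)
  case 1 then show ?case by (simp add: walk_Cons2)
next
  case (2 x) then show ?case by (simp add: walk_Cons2)
next
  case (3 x y' zs) then show ?case by (simp add: walk_Cons2)
qed

lemma walk_rev: "is_walk E xs \<Longrightarrow> is_walk E (rev xs)"
proof (induction xs rule: induct_list012)
  case 1 then show ?case by (simp add: is_walk_def)
next
  case (2 x) then show ?case by simp
next
  case (3 x y zs)
  then have "is_walk E (rev zs @ [y])" by (simp add: walk_Cons2)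
  moreover have "{y,x} \<in> E" using 3 by (simp add: walk_Cons2 insert_commute)
  ultimately show ?case using walk_snoc[of E "rev zs" y x] by simp
qed

lemma walk_mono: "is_walk E xs \<Longrightarrow> E \<subseteq> F \<Longrightarrow> is_walk F xs"
  unfolding is_walk_def by auto

lemma dist_le_walk:
  "is_walk E xs \<Longrightarrow> hd xs = u \<Longrightarrow> last xs = v \<Longrightarrow> dist E u v \<le> enat (length xs - 1)"
  unfolding dist_def by (rule INF_lower2[of xs]) auto

lemma dist_obtain:
  assumes "dist E u v \<le> enat m"
  shows "\<exists>xs. is_walk E xs \<and> hd xs = u \<and> last xs = v \<and> length xs - 1 \<le> m"
proof -
  let ?S = "{xs. is_walk E xs \<and> hd xs = u \<and> last xs = v}"
  let ?A = "(\<lambda>xs. enat (length xs - 1)) ` ?S"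
  have "?A \<noteq> {}"
  proof
    assume "?A = {}"
    then have "dist E u v = \<infinity>" unfolding dist_def by (simp add: Inf_enat_def)
    with assms show False by simp
  qed
  then have "Inf ?A \<in> ?A" unfolding Inf_enat_def by (auto intro: LeastI)
  then obtain xs where xs: "xs \<in> ?S" "Inf ?A = enat (length xs - 1)" by auto
  then have "enat (length xs - 1) \<le> enat m" using assms unfolding dist_def by simp
  then show ?thesis using xs by auto
qed

lemma replace_walk:
  assumes rep: "\<And>a b. {a,b} \<in> E \<Longrightarrow> \<exists>ys. is_walk H ys \<and> hd ys = a \<and> last ys = b \<and> length ys - 1 \<le> k"
  shows "is_walk E xs \<Longrightarrow> \<exists>ys. is_walk H ys \<and> hd ys = hd xs \<and> last ys = last xs \<and> length ys - 1 \<le> k * (length xs - 1)"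
proof (induction xs rule: induct_list012)
  case 1 then show ?case by (simp add: is_walk_def)
next
  case (2 x) then show ?case by (intro exI[of _ "[x]"]) simp
next
  case (3 x y zs)
  then obtain ys where ys: "is_walk H ys" "hd ys = y" "last ys = last (y # zs)" "length ys - 1 \<le> k * length zs"
    by (auto simp: walk_Cons2)
  from 3 have "{x,y} \<in> E" by (simp add: walk_Cons2)
  then obtain ws where ws: "is_walk H ws" "hd ws = x" "last ws = y" "length ws - 1 \<le> k"
    using rep by blast
  have ne: "ws \<noteq> []" "ys \<noteq> []" using ws ys walk_nonempty by auto
  have w: "is_walk H (ws @ tl ys)" using walk_append[OF ws(1) ys(1)] ws ys by simp
  have "hd (ws @ tl ys) = x" using ne ws by simp
  moreover have "last (ws @ tl ys) = last (x # y # zs)"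
  proof (cases "tl ys = []")
    case True
    then have "ys = [y]" using ne ys(2) by (cases ys) auto
    then show ?thesis using ys ws by simp
  next
    case False
    then show ?thesis using ys ne by (cases ys) auto
  qed
  moreover have "length (ws @ tl ys) - 1 \<le> k * (length (x # y # zs) - 1)"
  proof -
    have "length (ws @ tl ys) - 1 = (length ws - 1) + (length ys - 1)" using ne by (cases ys; cases ws) auto
    also have "\<dots> \<le> k + k * length zs" using ws ys by simp
    finally show ?thesis by simp
  qed
  ultimately show ?case using w by (intro exI[of _ "ws @ tl ys"]) simp
qed

lemma spanner_by_edges:
  assumes sub: "H \<subseteq> E" and k: "k > 0"
  and rep: "\<And>a b. {a,b} \<in> E \<Longrightarrow> \<exists>ys. is_walk H ys \<and> hd ys = a \<and> last ys = b \<and> length ys - 1 \<le> k"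
  shows "is_spanner n k E H"
  unfolding is_spanner_def
proof (intro conjI sub allI impI)
  fix u v
  show "dist H u v \<le> enat k * dist E u v"
  proof (cases "dist E u v")
    case infinity
    then show ?thesis using k by (simp add: imult_infinity_right)
  next
    case (enat d)
    then obtain xs where xs: "is_walk E xs" "hd xs = u" "last xs = v" "length xs - 1 \<le> d"
      using dist_obtain[of E u v d] by auto
    obtain ys where ys: "is_walk H ys" "hd ys = u" "last ys = v" "length ys - 1 \<le> k * (length xs - 1)"
      using replace_walk[OF rep xs(1)] xs by auto
    have "dist H u v \<le> enat (length ys - 1)" using dist_le_walk ys by blast
    also have "\<dots> \<le> enat (k * d)" using ys(4) xs(4)
      by (meson enat_ord_simps(1) le_trans mult_le_mono2)
    finally show ?thesis using enat by simp
  qed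
qed

lemma spanner_edge_walk:
  assumes "is_spanner n k E H" "{u,v} \<in> E" "u < n" "v < n"
  shows "\<exists>ys. is_walk H ys \<and> hd ys = u \<and> last ys = v \<and> length ys - 1 \<le> k"
proof -
  have "is_walk E [u,v]" using assms(2) by (simp add: walk_Cons2)
  then have "dist E u v \<le> enat 1" using dist_le_walk[of E "[u,v]"] by simp
  then have "enat k * dist E u v \<le> enat k * enat 1" by (rule mult_left_mono) simp
  then have "enat k * dist E u v \<le> enat k" by (simp add: one_enat_def[symmetric])
  then have "dist H u v \<le> enat k" using assms unfolding is_spanner_def by (meson order_trans)
  then show ?thesis using dist_obtain by blast
qed

lemma potential_walk:
  fixes f :: "nat \<Rightarrow> int"
  assumes lip: "\<And>a b. {a,b} \<in> H \<Longrightarrow> \<bar>f a - f b\<bar> \<le> 1"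
  shows "is_walk H xs \<Longrightarrow> \<bar>f (hd xs) - f (last xs)\<bar> \<le> int (length xs - 1)"
proof (induction xs rule: induct_list012)
  case 1 then show ?case by (simp add: is_walk_def)
next
  case (2 x) then show ?case by simp
next
  case (3 x y zs)
  then have "\<bar>f y - f (last (y # zs))\<bar> \<le> int (length zs)" "{x,y} \<in> H" by (auto simp: walk_Cons2)
  then have "\<bar>f x - f y\<bar> \<le> 1" using lip by blast
  then show ?case using \<open>\<bar>f y - f (last (y # zs))\<bar> \<le> int (length zs)\<close> by simp
qed




locale constr =
  fixes t L :: nat
  assumes t1: "1 \<le> t" and tL: "2*t+1 \<le> L"
begin

definition kk :: nat where "kk = L + 3*t - 2"
definition src :: "nat \<Rightarrow> nat" where "src j = (if j < 5 then j else j - 5)"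
definition dst :: "nat \<Rightarrow> nat" where "dst j = (if j < 5 then (j+1) mod 5 else (j - 3) mod 5)"
definition len :: "nat \<Rightarrow> nat" where "len j = (if j < 5 then t else L)"
definition base :: "nat \<Rightarrow> nat" where "base j = (if j < 5 then 5 + j*t else 5 + 5*t + (j-5)*L)"
definition enc :: "nat \<Rightarrow> nat \<Rightarrow> nat" where
  "enc j i = (if i = 0 then src j else if i = len j then dst j else base j + i)"
definition edge :: "nat \<Rightarrow> nat \<Rightarrow> nat set" where "edge j i = {enc j i, enc j (Suc i)}"
definition G :: "nat set set" where "G = {edge j i | j i. j < 10 \<and> i < len j}"
definition NV :: nat where "NV = 5 + 5*t + 5*L"

definition dthr :: "nat \<Rightarrow> nat" where
  "dthr v = (if v < 5 + 5*t then (v-5) div t else 5 + (v-5-5*t) div L)"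
definition dpos :: "nat \<Rightarrow> nat" where
  "dpos v = (if v < 5 + 5*t then (v-5) mod t else (v-5-5*t) mod L)"

lemma L2: "L \<ge> 3" using t1 tL by linarith

lemma len_pos: "len j > 0" using t1 L2 by (simp add: len_def)

lemma src_lt: "j < 10 \<Longrightarrow> src j < 5" by (auto simp: src_def)
lemma dst_lt: "dst j < 5" by (simp add: dst_def)

lemma enc0[simp]: "enc j 0 = src j" by (simp add: enc_def)
lemma enc_len[simp]: "enc j (len j) = dst j" using len_pos[of j] by (simp add: enc_def)
lemma enc_int: "0 < i \<Longrightarrow> i < len j \<Longrightarrow> enc j i = base j + i" by (simp add: enc_def)

lemma int_range:
  assumes "j < 10" "0 < i" "i < len j"
  shows "5 \<le> base j + i" "base j + i < NV"
    "j < 5 \<Longrightarrow> base j + i < 5 + 5*t" "\<not> j < 5 \<Longrightarrow> 5 + 5*t \<le> base j + i"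
proof -
  show "5 \<le> base j + i" by (simp add: base_def)
  show "j < 5 \<Longrightarrow> base j + i < 5 + 5*t"
  proof -
    assume j: "j < 5"
    have "j*t + i < j*t + t" using assms j by (simp add: len_def)
    also have "\<dots> = (j+1)*t" by simp
    also have "\<dots> \<le> 5*t" using j by (intro mult_right_mono) auto
    finally show ?thesis using j by (simp add: base_def)
  qed
  show "\<not> j < 5 \<Longrightarrow> 5 + 5*t \<le> base j + i" by (simp add: base_def)
  show "base j + i < NV"
  proof (cases "j < 5")
    case True
    have "j*t + i < j*t + t" using assms True by (simp add: len_def)
    also have "\<dots> = (j+1)*t" by simp
    also have "\<dots> \<le> 5*t" using True by (intro mult_right_mono) auto
    finally show ?thesis using True by (simp add: base_def NV_def)
  next
    case False
    have "(j-5)*L + i < (j-5)*L + L" using assms False by (simp add: len_def)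
    also have "\<dots> = (j-5+1)*L" by simp
    also have "\<dots> \<le> 5*L" using False assms(1) by (intro mult_right_mono) auto
    finally show ?thesis using False by (simp add: base_def NV_def)
  qed
qed

lemma decode:
  assumes "j < 10" "0 < i" "i < len j"
  shows "dthr (base j + i) = j" "dpos (base j + i) = i"
proof -
  have "dthr (base j + i) = j \<and> dpos (base j + i) = i"
  proof (cases "j < 5")
    case True
    then have lt: "base j + i < 5 + 5*t" using int_range assms by blast
    have i: "i < t" using assms True by (simp add: len_def)
    have "base j + i - 5 = i + j * t" using True by (simp add: base_def)
    then show ?thesis using lt i by (simp add: dthr_def dpos_def)
  next
    case False
    then have ge: "\<not> base j + i < 5 + 5*t" using int_range assms by (meson not_le)
    have i: "i < L" using assms False by (simp add: len_def)
    have "base j + i - 5 - 5*t = i + (j-5) * L" using False by (simp add: base_def)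
    then show ?thesis using ge i False by (simp add: dthr_def dpos_def)
  qed
  then show "dthr (base j + i) = j" "dpos (base j + i) = i" by auto
qed

lemma enc_lt: "j < 10 \<Longrightarrow> i \<le> len j \<Longrightarrow> enc j i < NV"
  using int_range[of j i] src_lt[of j] dst_lt[of j]
  by (cases "i = 0"; cases "i = len j") (auto simp: enc_def NV_def)

definition pot :: "(nat \<Rightarrow> nat \<Rightarrow> int) \<Rightarrow> (nat \<Rightarrow> int) \<Rightarrow> nat \<Rightarrow> int" where
  "pot F \<phi> v = (if v < 5 then \<phi> v else F (dthr v) (dpos v))"

definition cons :: "(nat \<Rightarrow> nat \<Rightarrow> int) \<Rightarrow> (nat \<Rightarrow> int) \<Rightarrow> bool" where
  "cons F \<phi> \<longleftrightarrow> (\<forall>j<10. F j 0 = \<phi> (src j) \<and> F j (len j) = \<phi> (dst j))"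

definition lip :: "(nat \<Rightarrow> nat \<Rightarrow> int) \<Rightarrow> nat set set \<Rightarrow> bool" where
  "lip F H \<longleftrightarrow> (\<forall>j<10. \<forall>i<len j. edge j i \<in> H \<longrightarrow> \<bar>F j i - F j (Suc i)\<bar> \<le> 1)"

lemma pot_enc:
  assumes "cons F \<phi>" "j < 10" "i \<le> len j"
  shows "pot F \<phi> (enc j i) = F j i"
proof -
  consider "i = 0" | "i = len j" | "0 < i \<and> i < len j" using assms by linarith
  then show ?thesis
  proof cases
    case 1 then show ?thesis using assms src_lt[of j] by (simp add: pot_def cons_def)
  next
    case 2 then show ?thesis using assms dst_lt[of j] by (simp add: pot_def cons_def)
  next
    case 3
    then show ?thesis using assms decode[of j i] int_range[of j i] by (simp add: pot_def enc_int)
  qed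
qed

lemma pot_lip:
  assumes "H \<subseteq> G" "cons F \<phi>" "lip F H" "{a,b} \<in> H"
  shows "\<bar>pot F \<phi> a - pot F \<phi> b\<bar> \<le> 1"
proof -
  obtain j i where ji: "j < 10" "i < len j" "{a,b} = edge j i" using assms(1,4) unfolding G_def by blast
  then have "\<bar>F j i - F j (Suc i)\<bar> \<le> 1" using assms(3,4) unfolding lip_def by auto
  moreover have "pot F \<phi> (enc j i) = F j i" "pot F \<phi> (enc j (Suc i)) = F j (Suc i)"
    using pot_enc[OF assms(2) ji(1)] ji(2) by auto
  ultimately show ?thesis using ji(3) unfolding edge_def by (auto simp: doubleton_eq_iff)
qed

lemma G_sub: "e \<in> G \<Longrightarrow> \<exists>j i. j < 10 \<and> i < len j \<and> e = edge j i" unfolding G_def by blast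

lemma edge_in_G: "j < 10 \<Longrightarrow> i < len j \<Longrightarrow> edge j i \<in> G" unfolding G_def by blast

lemma spanner_pot:
  assumes sp: "is_spanner n kk G H" and nv: "NV \<le> n" and c: "cons F \<phi>" and l: "lip F H"
    and j: "j < 10" "i < len j"
  shows "\<bar>F j i - F j (Suc i)\<bar> \<le> int kk"
proof -
  have sub: "H \<subseteq> G" using sp unfolding is_spanner_def by auto
  have "enc j i < n" "enc j (Suc i) < n" using enc_lt[of j i] enc_lt[of j "Suc i"] j nv by auto
  then obtain ys where ys: "is_walk H ys" "hd ys = enc j i" "last ys = enc j (Suc i)" "length ys - 1 \<le> kk"
    using spanner_edge_walk[OF sp, of "enc j i" "enc j (Suc i)"] edge_in_G[OF j] by (auto simp: edge_def)
  have "\<bar>pot F \<phi> (hd ys) - pot F \<phi> (last ys)\<bar> \<le> int (length ys - 1)"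
    using potential_walk[of H "pot F \<phi>" ys] pot_lip[OF sub c l] ys(1) by blast
  then show ?thesis using ys pot_enc[OF c j(1), of i] pot_enc[OF c j(1), of "Suc i"] j by simp
qed

end



context constr begin

definition interp :: "(nat \<Rightarrow> int) \<Rightarrow> nat \<Rightarrow> nat \<Rightarrow> int" where
  "interp \<phi> j i = min (\<phi> (src j) + int i) (\<phi> (dst j) + int (len j) - int i)"

definition ok :: "(nat \<Rightarrow> int) \<Rightarrow> nat \<Rightarrow> bool" where
  "ok \<phi> j \<longleftrightarrow> \<bar>\<phi> (src j) - \<phi> (dst j)\<bar> \<le> int (len j)"

definition Fg :: "(nat \<Rightarrow> int) \<Rightarrow> (nat \<Rightarrow> nat option) \<Rightarrow> nat \<Rightarrow> int \<Rightarrow> nat \<Rightarrow> nat \<Rightarrow> nat \<Rightarrow> int" where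
  "Fg \<phi> brk j0 \<sigma> p0 j i =
    (if j = j0 then (if i \<le> p0 then \<phi> (src j) - \<sigma> * int i else \<phi> (dst j) + \<sigma> * (int (len j) - int i))
     else (case brk j of Some r \<Rightarrow> (if i \<le> r then \<phi> (src j) else \<phi> (dst j)) | None \<Rightarrow> interp \<phi> j i))"

lemma gen_contra:
  assumes sp: "is_spanner n kk G H" and nv: "NV \<le> n"
    and j0: "j0 < 10" "p0 < len j0" "edge j0 p0 \<notin> H"
    and sg: "\<sigma> = 1 \<or> \<sigma> = -1"
    and brk: "\<And>j r. j \<noteq> j0 \<Longrightarrow> brk j = Some r \<Longrightarrow> r < len j \<and> edge j r \<notin> H"
    and okk: "\<And>j. j < 10 \<Longrightarrow> j \<noteq> j0 \<Longrightarrow> brk j = None \<Longrightarrow> ok \<phi> j"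
    and big: "\<bar>\<phi> (src j0) - \<phi> (dst j0) - \<sigma> * (int (len j0) - 1)\<bar> > int kk"
  shows False
proof -
  let ?F = "Fg \<phi> brk j0 \<sigma> p0"
  have c: "cons ?F \<phi>" unfolding cons_def
  proof (intro allI impI conjI)
    fix j :: nat assume j: "j < 10"
    show "?F j 0 = \<phi> (src j)"
    proof (cases "j = j0")
      case False
      then show ?thesis using okk[OF j False] brk[OF False]
        by (cases "brk j") (auto simp: Fg_def interp_def ok_def)
    qed (simp add: Fg_def)
    show "?F j (len j) = \<phi> (dst j)"
    proof (cases "j = j0")
      case False
      then show ?thesis using okk[OF j False] brk[OF False]
        by (cases "brk j") (auto simp: Fg_def interp_def ok_def)
    qed (use j0 in \<open>simp add: Fg_def\<close>)
  qed
  have l: "lip ?F H" unfolding lip_def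
  proof (intro allI impI)
    fix j i :: nat assume j: "j < 10" and i: "i < len j" and e: "edge j i \<in> H"
    show "\<bar>?F j i - ?F j (Suc i)\<bar> \<le> 1"
    proof (cases "j = j0")
      case True
      then have "i \<noteq> p0" using e j0 by auto
      then show ?thesis using True sg by (auto simp: Fg_def algebra_simps)
    next
      case False
      show ?thesis
      proof (cases "brk j")
        case None
        then show ?thesis using False by (auto simp: Fg_def interp_def)
      next
        case (Some r)
        then have "i \<noteq> r" using e brk[OF False] by auto
        then show ?thesis using False Some by (auto simp: Fg_def)
      qed
    qed
  qed
  have "\<bar>?F j0 p0 - ?F j0 (Suc p0)\<bar> \<le> int kk" using spanner_pot[OF sp nv c l j0(1,2)] .
  moreover have "?F j0 p0 - ?F j0 (Suc p0) = \<phi> (src j0) - \<phi> (dst j0) - \<sigma> * (int (len j0) - 1)"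
    using j0 by (simp add: Fg_def algebra_simps)
  ultimately show False using big by simp
qed

lemma thread_one:
  assumes sp: "is_spanner n kk G H" and nv: "NV \<le> n"
    and j: "j < 10" and pq: "p < q" "q < len j" and e: "edge j p \<notin> H" "edge j q \<notin> H"
  shows False
proof -
  define F where "F = (\<lambda>j' i. if j' = j \<and> p < i \<and> i \<le> q then (0::int) else int kk + 1)"
  define \<phi> where "\<phi> = (\<lambda>b::nat. int kk + 1)"
  have c: "cons F \<phi>" using pq unfolding cons_def F_def \<phi>_def by auto
  have l: "lip F H" unfolding lip_def
  proof (intro allI impI)
    fix j' i :: nat assume "j' < 10" "i < len j'" "edge j' i \<in> H"
    then have "j' = j \<longrightarrow> i \<noteq> p \<and> i \<noteq> q" using e by auto
    then show "\<bar>F j' i - F j' (Suc i)\<bar> \<le> 1" unfolding F_def by auto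
  qed
  have "\<bar>F j p - F j (Suc p)\<bar> \<le> int kk" using spanner_pot[OF sp nv c l j] pq by simp
  then show False using pq unfolding F_def by simp
qed

lemma lt5_cases: "(m::nat) < 5 \<Longrightarrow> m = 0 \<or> m = 1 \<or> m = 2 \<or> m = 3 \<or> m = 4" by arith
lemma lt10_cases: "(j::nat) < 10 \<Longrightarrow> j = 0 \<or> j = 1 \<or> j = 2 \<or> j = 3 \<or> j = 4 \<or> j = 5 \<or> j = 6 \<or> j = 7 \<or> j = 8 \<or> j = 9" by arith

definition tab1 :: "nat \<Rightarrow> int" where
  "tab1 r = (if r = 0 then 0 else if r = 1 then 3*int t else if r = 2 then 3*int t else if r = 3 then 2*int t else int t)"
definition tab2 :: "nat \<Rightarrow> int" where
  "tab2 r = (if r = 0 then 3*int t else if r = 1 then 3*int t else if r = 2 then 0 else if r = 3 then int t else 2*int t)"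
definition tab3 :: "nat \<Rightarrow> int" where
  "tab3 r = (if r = 0 then 0 else if r = 1 then 2*int L else if r = 2 then int L else if r = 3 then int L else int L + int t)"

lemma inner_outer1:
  assumes sp: "is_spanner n kk G H" and nv: "NV \<le> n" and m: "m < 5"
    and pr: "p < L" "r < t" and e: "edge (5+m) p \<notin> H" "edge m r \<notin> H"
  shows False
proof -
  define \<phi> where "\<phi> = (\<lambda>b. tab1 ((b + 5 - m) mod 5))"
  define brk where "brk = (\<lambda>j. if j = m then Some r else None)"
  show False
  proof (rule gen_contra[OF sp nv, of "5+m" p 1 brk \<phi>])
    show "5 + m < 10" using m by simp
    show "p < len (5+m)" using pr by (simp add: len_def)
    show "edge (5 + m) p \<notin> H" by fact
    show "(1::int) = 1 \<or> (1::int) = -1" by simp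
    show "\<And>j r'. j \<noteq> 5 + m \<Longrightarrow> brk j = Some r' \<Longrightarrow> r' < len j \<and> edge j r' \<notin> H"
      using pr e m by (auto simp: brk_def len_def split: if_splits)
    show "\<And>j. j < 10 \<Longrightarrow> j \<noteq> 5 + m \<Longrightarrow> brk j = None \<Longrightarrow> ok \<phi> j"
    proof -
      fix j :: nat assume j: "j < 10" "j \<noteq> 5 + m" "brk j = None"
      then have "j \<noteq> m" by (auto simp: brk_def)
      from lt5_cases[OF m] lt10_cases[OF j(1)] this j(2) show "ok \<phi> j"
        using t1 tL by (elim disjE) (auto simp: ok_def \<phi>_def tab1_def src_def dst_def len_def)
    qed
    show "int kk < \<bar>\<phi> (src (5 + m)) - \<phi> (dst (5 + m)) - 1 * (int (len (5 + m)) - 1)\<bar>"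
      using lt5_cases[OF m] t1 tL by (elim disjE) (auto simp: kk_def \<phi>_def tab1_def src_def dst_def len_def)
  qed
qed

lemma inner_outer2:
  assumes sp: "is_spanner n kk G H" and nv: "NV \<le> n" and m: "m < 5"
    and pr: "p < L" "r < t" and e: "edge (5+m) p \<notin> H" "edge ((m+1) mod 5) r \<notin> H"
  shows False
proof -
  define \<phi> where "\<phi> = (\<lambda>b. tab2 ((b + 5 - m) mod 5))"
  define brk where "brk = (\<lambda>j. if j = (m+1) mod 5 then Some r else None)"
  show False
  proof (rule gen_contra[OF sp nv, of "5+m" p "-1" brk \<phi>])
    show "5 + m < 10" using m by simp
    show "p < len (5+m)" using pr by (simp add: len_def)
    show "edge (5 + m) p \<notin> H" by fact
    show "(-1::int) = 1 \<or> (-1::int) = -1" by simp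
    show "\<And>j r'. j \<noteq> 5 + m \<Longrightarrow> brk j = Some r' \<Longrightarrow> r' < len j \<and> edge j r' \<notin> H"
      using pr e m by (auto simp: brk_def len_def split: if_splits)
    show "\<And>j. j < 10 \<Longrightarrow> j \<noteq> 5 + m \<Longrightarrow> brk j = None \<Longrightarrow> ok \<phi> j"
    proof -
      fix j :: nat assume j: "j < 10" "j \<noteq> 5 + m" "brk j = None"
      then have "j \<noteq> (m+1) mod 5" by (auto simp: brk_def)
      from lt5_cases[OF m] lt10_cases[OF j(1)] this j(2) show "ok \<phi> j"
        using t1 tL by (elim disjE) (auto simp: ok_def \<phi>_def tab2_def src_def dst_def len_def)
    qed
    show "int kk < \<bar>\<phi> (src (5 + m)) - \<phi> (dst (5 + m)) - (-1) * (int (len (5 + m)) - 1)\<bar>"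
      using lt5_cases[OF m] t1 tL by (elim disjE) (auto simp: kk_def \<phi>_def tab2_def src_def dst_def len_def)
  qed
qed

lemma outer3:
  assumes sp: "is_spanner n kk G H" and nv: "NV \<le> n" and m: "m < 5"
    and pr: "r < t" "r1 < t" "r2 < t"
    and e: "edge m r \<notin> H" "edge ((m+4) mod 5) r1 \<notin> H" "edge ((m+1) mod 5) r2 \<notin> H"
  shows False
proof -
  define \<phi> where "\<phi> = (\<lambda>b. tab3 ((b + 5 - m) mod 5))"
  define brk where "brk = (\<lambda>j. if j = (m+4) mod 5 then Some r1 else if j = (m+1) mod 5 then Some r2 else None)"
  show False
  proof (rule gen_contra[OF sp nv, of "m" r 1 brk \<phi>])
    show "m < 10" using m by simp
    show "r < len m" using pr m by (simp add: len_def)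
    show "edge m r \<notin> H" by fact
    show "(1::int) = 1 \<or> (1::int) = -1" by simp
    show "\<And>j r'. j \<noteq> m \<Longrightarrow> brk j = Some r' \<Longrightarrow> r' < len j \<and> edge j r' \<notin> H"
      using pr e m by (auto simp: brk_def len_def split: if_splits)
    show "\<And>j. j < 10 \<Longrightarrow> j \<noteq> m \<Longrightarrow> brk j = None \<Longrightarrow> ok \<phi> j"
    proof -
      fix j :: nat assume j: "j < 10" "j \<noteq> m" "brk j = None"
      then have "j \<noteq> (m+1) mod 5" "j \<noteq> (m+4) mod 5" by (auto simp: brk_def split: if_splits)
      from lt5_cases[OF m] lt10_cases[OF j(1)] this j(2) show "ok \<phi> j"
        using t1 tL by (elim disjE) (auto simp: ok_def \<phi>_def tab3_def src_def dst_def len_def)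
    qed
    show "int kk < \<bar>\<phi> (src m) - \<phi> (dst m) - 1 * (int (len m) - 1)\<bar>"
      using lt5_cases[OF m] t1 tL by (elim disjE) (auto simp: kk_def \<phi>_def tab3_def src_def dst_def len_def)
  qed
qed

end



lemma comb:
  fixes b :: "nat \<Rightarrow> bool"
  assumes inner: "\<And>m. m < 5 \<Longrightarrow> b (5+m) \<Longrightarrow> \<not> b m \<and> \<not> b ((m+1) mod 5)"
    and outer: "\<And>m. m < 5 \<Longrightarrow> b m \<Longrightarrow> b ((m+4) mod 5) \<Longrightarrow> b ((m+1) mod 5) \<Longrightarrow> False"
    and some: "\<exists>j<5. b j"
  shows "(\<Sum>j<10. if b j then 1 else 0 :: nat) \<le> 4"
proof -
  have i0: "b 5 \<Longrightarrow> \<not> b 0 \<and> \<not> b 1" using inner[of 0] by simp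
  have i1: "b 6 \<Longrightarrow> \<not> b 1 \<and> \<not> b 2" using inner[of 1] by (simp add: numeral_2_eq_2)
  have i2: "b 7 \<Longrightarrow> \<not> b 2 \<and> \<not> b 3" using inner[of 2] by simp
  have i3: "b 8 \<Longrightarrow> \<not> b 3 \<and> \<not> b 4" using inner[of 3] by simp
  have i4: "b 9 \<Longrightarrow> \<not> b 4 \<and> \<not> b 0" using inner[of 4] by simp
  have o0: "\<not> (b 0 \<and> b 4 \<and> b 1)" using outer[of 0] by auto
  have o1: "\<not> (b 1 \<and> b 0 \<and> b 2)" using outer[of 1] by (auto simp: numeral_2_eq_2)
  have o2: "\<not> (b 2 \<and> b 1 \<and> b 3)" using outer[of 2] by auto
  have o3: "\<not> (b 3 \<and> b 2 \<and> b 4)" using outer[of 3] by auto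
  have o4: "\<not> (b 4 \<and> b 3 \<and> b 0)" using outer[of 4] by auto
  have s: "b 0 \<or> b 1 \<or> b 2 \<or> b 3 \<or> b 4" proof -
    obtain j where "j < 5" "b j" using some by blast
    moreover have "j = 0 \<or> j = 1 \<or> j = 2 \<or> j = 3 \<or> j = 4" using \<open>j < 5\<close> by arith
    ultimately show ?thesis by auto
  qed
  have e: "(\<Sum>j<10. if b j then 1 else 0 :: nat) =
    (if b 0 then 1 else 0) + (if b 1 then 1 else 0) + (if b 2 then 1 else 0) + (if b 3 then 1 else 0) +
    (if b 4 then 1 else 0) + (if b 5 then 1 else 0) + (if b 6 then 1 else 0) + (if b 7 then 1 else 0) +
    (if b 8 then 1 else 0) + (if b 9 then 1 else 0)"
    by (simp add: eval_nat_numeral)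
  have pr: "\<exists>j<5. \<not> b j \<and> \<not> b (5+j)"
  proof (rule ccontr)
    assume "\<not> ?thesis"
    then have a: "b 0 \<or> b 5" "b 1 \<or> b 6" "b 2 \<or> b 7" "b 3 \<or> b 8" "b 4 \<or> b 9"
      by (auto dest: spec[of _ 0] spec[of _ 1] spec[of _ 2] spec[of _ 3] spec[of _ 4])
    show False using a i0 i1 i2 i3 i4 o0 o1 o2 o3 o4 s by blast
  qed
  have q: "\<And>x y :: bool. (if x then 1 else 0 :: nat) + (if y then 1 else 0) \<le> 2" by simp
  have q0: "(if b 0 then 1 else 0 :: nat) + (if b 5 then 1 else 0) \<le> 1" using i0 by auto
  have q1: "(if b 1 then 1 else 0 :: nat) + (if b 6 then 1 else 0) \<le> 1" using i1 by auto
  have q2: "(if b 2 then 1 else 0 :: nat) + (if b 7 then 1 else 0) \<le> 1" using i2 by auto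
  have q3: "(if b 3 then 1 else 0 :: nat) + (if b 8 then 1 else 0) \<le> 1" using i3 by auto
  have q4: "(if b 4 then 1 else 0 :: nat) + (if b 9 then 1 else 0) \<le> 1" using i4 by auto
  obtain j where j: "j < 5" "\<not> b j" "\<not> b (5+j)" using pr by blast
  have "j = 0 \<or> j = 1 \<or> j = 2 \<or> j = 3 \<or> j = 4" using j(1) by arith
  then show ?thesis unfolding e using q0 q1 q2 q3 q4 j by (elim disjE) auto
qed




lemma last_tl': "tl xs \<noteq> [] \<Longrightarrow> last (tl xs) = last xs" by (cases xs) auto

context constr begin

definition seg :: "nat \<Rightarrow> nat \<Rightarrow> nat \<Rightarrow> nat list" where
  "seg j a b = map (enc j) [a..<Suc b]"

lemma seg_props:
  assumes "a \<le> b"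
  shows "hd (seg j a b) = enc j a" "last (seg j a b) = enc j b" "length (seg j a b) = Suc (b - a)"
proof -
  have ne: "[a..<Suc b] \<noteq> []" using assms by simp
  show "hd (seg j a b) = enc j a" unfolding seg_def using assms hd_map[OF ne] by (simp del: upt_Suc)
  show "last (seg j a b) = enc j b" unfolding seg_def using assms last_map[OF ne] by (simp del: upt_Suc)
  show "length (seg j a b) = Suc (b - a)" unfolding seg_def using assms by simp
qed

lemma seg_walk:
  assumes "a \<le> b" "\<And>i. a \<le> i \<Longrightarrow> i < b \<Longrightarrow> edge j i \<in> H"
  shows "is_walk H (seg j a b)"
  using assms
proof (induction b)
  case 0 then show ?case by (simp add: seg_def)
next
  case (Suc b)
  show ?case
  proof (cases "a = Suc b")
    case True then show ?thesis by (simp add: seg_def)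
  next
    case False
    then have ab: "a \<le> b" using Suc by simp
    then have w: "is_walk H (seg j a b)" using Suc by simp
    obtain xs where xs: "seg j a b = xs @ [enc j b]"
      using ab by (simp add: seg_def)
    have "seg j a (Suc b) = xs @ [enc j b, enc j (Suc b)]" using xs ab by (simp add: seg_def)
    moreover have "edge j b \<in> H" using Suc ab by simp
    ultimately show ?thesis using w xs walk_snoc[of H xs "enc j b" "enc j (Suc b)"] by (simp add: edge_def)
  qed
qed

lemma finite_G: "finite G"
proof -
  have "G = (\<lambda>(j,i). edge j i) ` (SIGMA j:{..<10}. {..<len j})" unfolding G_def by auto
  then show ?thesis by simp
qed

lemma enc_ge5: "j < 10 \<Longrightarrow> 0 < i \<Longrightarrow> i < len j \<Longrightarrow> enc j i \<ge> 5"
  using int_range[of j i] by (simp add: enc_int)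

lemma enc_cases: "j < 10 \<Longrightarrow> i \<le> len j \<Longrightarrow> enc j i < 5 \<or> (0 < i \<and> i < len j \<and> enc j i = base j + i)"
  by (cases "i = 0"; cases "i = len j") (auto simp: enc_int src_lt dst_lt)

lemma enc_eq_internal:
  assumes "j < 10" "i \<le> len j" "j' < 10" "0 < i'" "i' < len j'" "enc j i = base j' + i'"
  shows "j = j' \<and> i = i'"
proof -
  have "base j' + i' \<ge> 5" using int_range[of j' i'] assms by simp
  then have "0 < i \<and> i < len j \<and> enc j i = base j + i" using enc_cases[of j i] assms by auto
  then show ?thesis using decode[of j i] decode[of j' i'] assms by metis
qed

definition X :: "nat set set" where "X = (\<lambda>m. edge (5+m) 0) ` {..<5}"
definition H0 :: "nat set set" where "H0 = G - X"

lemma edgeX: "edge (5+m) 0 = {m, base (5+m) + 1}" if "m < 5"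
  using that L2 by (simp add: edge_def enc_def src_def len_def)

lemma X_slot:
  assumes "j < 10" "i < len j" "edge j i \<in> X"
  shows "5 \<le> j \<and> i = 0"
proof -
  obtain m where m: "m < 5" "edge j i = edge (5+m) 0" using assms unfolding X_def by auto
  have l: "0 < (1::nat)" "1 < len (5+m)" using L2 by (auto simp: len_def)
  have v: "base (5+m) + 1 \<in> edge j i" using m edgeX by simp
  then have "enc j i = base (5+m) + 1 \<or> enc j (Suc i) = base (5+m) + 1" by (auto simp: edge_def)
  then show ?thesis
  proof
    assume "enc j i = base (5+m) + 1"
    then have ji: "j = 5+m" "i = 1" using enc_eq_internal[of j i "5+m" 1] assms m l by auto
    then have "enc j 2 \<in> {m, base (5+m) + 1}" using m edgeX by (auto simp: edge_def numeral_2_eq_2)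
    moreover have "enc j 2 = base (5+m) + 2" using ji L2 by (simp add: enc_def len_def)
    moreover have "base (5+m) + 2 \<ge> 5" by (simp add: base_def)
    ultimately show ?thesis using m by auto
  next
    assume "enc j (Suc i) = base (5+m) + 1"
    then have "j = 5+m" "Suc i = 1" using enc_eq_internal[of j "Suc i" "5+m" 1] assms m l by auto
    then show ?thesis by simp
  qed
qed

lemma X_sub: "X \<subseteq> G" unfolding X_def using L2 by (auto intro!: edge_in_G simp: len_def)

lemma card_X: "card X = 5"
proof -
  have "inj_on (\<lambda>m. edge (5+m) 0) {..<5}"
  proof (rule inj_onI)
    fix m m' assume mm: "m \<in> {..<(5::nat)}" "m' \<in> {..<5}" "edge (5+m) 0 = edge (5+m') 0"
    then have "m' \<in> {m, base (5+m) + 1}" using edgeX[of m] edgeX[of m'] by auto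
    moreover have "base (5+m) + 1 \<ge> 5" by (simp add: base_def)
    ultimately show "m = m'" using mm by auto
  qed
  then show ?thesis unfolding X_def by (simp add: card_image)
qed

lemma card_H0: "card H0 + 5 = card G"
proof -
  have "card H0 = card G - card X" unfolding H0_def using X_sub finite_G by (simp add: card_Diff_subset finite_subset)
  moreover have "card X \<le> card G" using X_sub finite_G card_mono by blast
  ultimately show ?thesis using card_X by simp
qed

lemma H0_spanner: "is_spanner n kk G H0"
proof (rule spanner_by_edges)
  show "H0 \<subseteq> G" unfolding H0_def by auto
  show "kk > 0" using t1 tL by (simp add: kk_def)
  fix a b assume ab: "{a,b} \<in> G"
  show "\<exists>ys. is_walk H0 ys \<and> hd ys = a \<and> last ys = b \<and> length ys - 1 \<le> kk"
  proof (cases "{a,b} \<in> H0")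
    case True
    then show ?thesis using t1 tL by (intro exI[of _ "[a,b]"]) (simp add: walk_Cons2 kk_def)
  next
    case False
    then have "{a,b} \<in> X" using ab unfolding H0_def by auto
    then obtain m where m: "m < 5" "{a,b} = {m, base (5+m) + 1}" unfolding X_def using edgeX by auto
    define m1 where "m1 = (m+1) mod 5"
    have m1: "m1 < 5" "src m1 = dst m" "dst m1 = dst (5+m)" unfolding m1_def using lt5_cases[OF m(1)]
      by (elim disjE; simp add: src_def dst_def)+
    define W where "W = seg m 0 t @ tl (seg m1 0 t) @ tl (rev (seg (5+m) 1 L))"
    have inH0: "edge j i \<in> H0" if "j < 10" "i < len j" "j < 5 \<or> 0 < i" for j i
      using that X_slot[of j i] edge_in_G[of j i] unfolding H0_def by auto
    have w1: "is_walk H0 (seg m 0 t)" using m inH0 by (intro seg_walk) (auto simp: len_def)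
    have w2: "is_walk H0 (seg m1 0 t)" using m1 inH0 by (intro seg_walk) (auto simp: len_def)
    have w3: "is_walk H0 (rev (seg (5+m) 1 L))" using m inH0 L2
      by (intro walk_rev seg_walk) (auto simp: len_def)
    have lt: "t = len m" "t = len m1" "L = len (5+m)" using m m1 by (auto simp: len_def)
    have e1: "enc m t = dst m" "enc m1 t = dst m1" "enc (5+m) L = dst (5+m)"
      using enc_len[of m] enc_len[of m1] enc_len[of "5+m"] lt by simp_all
    have h1: "hd (seg m 0 t) = m" "last (seg m 0 t) = dst m" using seg_props[of 0 t m] e1 m
      by (auto simp: src_def)
    have h2: "hd (seg m1 0 t) = dst m" "last (seg m1 0 t) = dst (5+m)" using seg_props[of 0 t m1] e1 m1
      by auto
    have h3: "hd (rev (seg (5+m) 1 L)) = dst (5+m)" "last (rev (seg (5+m) 1 L)) = base (5+m) + 1"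
      using seg_props[of 1 L "5+m"] e1 L2 by (auto simp: hd_rev last_rev enc_int len_def)
    have ne: "seg m1 0 t \<noteq> []" "rev (seg (5+m) 1 L) \<noteq> []" using L2 by (auto simp: seg_def)
    have w23: "is_walk H0 (seg m1 0 t @ tl (rev (seg (5+m) 1 L)))"
      using walk_append[OF w2 w3] h2 h3 by simp
    have hw23: "hd (seg m1 0 t @ tl (rev (seg (5+m) 1 L))) = dst m" using h2 ne by simp
    have wW: "is_walk H0 W" unfolding W_def
      using walk_append[OF w1 w23] h1 hw23 ne by simp
    have ne0: "seg m 0 t \<noteq> []" by (simp add: seg_def)
    have hW: "hd W = m" unfolding W_def using h1 ne0 by (simp add: hd_append2)
    have lW: "last W = base (5+m) + 1"
    proof -
      have "length (rev (seg (5+m) 1 L)) \<ge> 2" using seg_props[of 1 L "5+m"] L2 by simp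
      then have "tl (rev (seg (5+m) 1 L)) \<noteq> []" by (cases "rev (seg (5+m) 1 L)") auto
      then show ?thesis unfolding W_def using h3 by (simp add: last_tl')
    qed
    have lenW: "length W - 1 \<le> kk"
    proof -
      have "length W = Suc t + t + (L - 1)" unfolding W_def
        using seg_props[of 0 t m] seg_props[of 0 t m1] seg_props[of 1 L "5+m"] L2 by simp
      then show ?thesis using t1 tL by (simp add: kk_def)
    qed
    show ?thesis
    proof (cases "a = m")
      case True
      then have "b = base (5+m) + 1" using m(2) by (auto simp: doubleton_eq_iff)
      then show ?thesis using wW hW lW lenW True by blast
    next
      case False
      then have "a = base (5+m) + 1" "b = m" using m(2) by (auto simp: doubleton_eq_iff)
      moreover have "is_walk H0 (rev W)" using walk_rev wW by blast
      moreover have "W \<noteq> []" using walk_nonempty wW by blast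
      ultimately show ?thesis using hW lW lenW
        by (intro exI[of _ "rev W"]) (simp add: hd_rev last_rev)
    qed
  qed
qed

end



context constr begin

lemma enc_step_ne: "j < 10 \<Longrightarrow> i < len j \<Longrightarrow> enc j i \<noteq> enc j (Suc i)"
proof -
  assume j: "j < 10" and i: "i < len j"
  show ?thesis
  proof (cases "i = 0")
    case True
    show ?thesis
    proof (cases "Suc 0 = len j")
      case True
      then have "j < 5" using L2 by (auto simp: len_def split: if_splits)
      then have "src j \<noteq> dst j" using lt5_cases[OF \<open>j < 5\<close>] by (elim disjE; simp add: src_def dst_def)
      then show ?thesis using \<open>i = 0\<close> True enc_len[of j] by (simp add: True[symmetric])
    next
      case False
      then have "enc j (Suc 0) \<ge> 5" using enc_ge5[OF j, of 1] i True by simp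
      then show ?thesis using True src_lt[OF j] by simp
    qed
  next
    case False
    then have a: "enc j i = base j + i" using i by (simp add: enc_int)
    show ?thesis
    proof (cases "Suc i = len j")
      case True
      then show ?thesis using a dst_lt[of j] enc_len[of j] by (simp add: base_def split: if_splits)
    next
      case False
      then show ?thesis using a i by (simp add: enc_int)
    qed
  qed
qed

lemma is_graph_G: "NV \<le> n \<Longrightarrow> is_graph n G"
  unfolding is_graph_def
proof
  fix e assume nv: "NV \<le> n" and e: "e \<in> G"
  then obtain j i where ji: "j < 10" "i < len j" "e = edge j i" using G_sub by blast
  have "enc j i < n" "enc j (Suc i) < n" using enc_lt[of j i] enc_lt[of j "Suc i"] ji nv by auto
  then show "e \<in> {{u, v} |u v. u < n \<and> v < n \<and> u \<noteq> v}"
    using ji enc_step_ne[of j i] unfolding edge_def by blast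
qed

definition cv :: "nat \<Rightarrow> nat" where "cv q = enc (q div t) (q mod t)"

lemma cv_eq: "q < 5*t \<Longrightarrow> cv q = (if q mod t = 0 then q div t else 5 + q)"
proof -
  assume q: "q < 5*t"
  have j: "q div t < 5" using q t1 by (simp add: div_less_iff_less_mult mult.commute)
  have i: "q mod t < t" using t1 by simp
  show ?thesis
  proof (cases "q mod t = 0")
    case True then show ?thesis using j by (simp add: cv_def src_def)
  next
    case False
    then have "cv q = base (q div t) + q mod t" using i j by (simp add: cv_def enc_int len_def)
    also have "\<dots> = 5 + q" using j by (simp add: base_def)
    finally show ?thesis using False by simp
  qed
qed

lemma cycle_girth:
  assumes outer: "\<And>j i. j < 5 \<Longrightarrow> i < t \<Longrightarrow> edge j i \<in> H"
  shows "girth H \<le> enat (5*t)"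
proof -
  define cyc where "cyc = map cv [0..<5*t]"
  have len: "length cyc = 5*t" by (simp add: cyc_def)
  have dist: "distinct cyc" unfolding cyc_def distinct_map
  proof
    show "inj_on cv (set [0..<5*t])"
    proof (rule inj_onI)
      fix q q' assume "q \<in> set [0..<5*t]" "q' \<in> set [0..<5*t]" and eq: "cv q = cv q'"
      then have qq: "q < 5*t" "q' < 5*t" by auto
      show "q = q'"
      proof (cases "q mod t = 0"; cases "q' mod t = 0")
        assume "q mod t = 0" "q' mod t = 0"
        then show ?thesis using eq cv_eq[OF qq(1)] cv_eq[OF qq(2)]
          by (metis div_mult_mod_eq add_0_right)
      next
        assume "q mod t = 0" "q' mod t \<noteq> 0"
        moreover have "q div t < 5" using qq t1 by (simp add: div_less_iff_less_mult mult.commute)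
        ultimately show ?thesis using eq cv_eq[OF qq(1)] cv_eq[OF qq(2)] by simp
      next
        assume "q mod t \<noteq> 0" "q' mod t = 0"
        moreover have "q' div t < 5" using qq t1 by (simp add: div_less_iff_less_mult mult.commute)
        ultimately show ?thesis using eq cv_eq[OF qq(1)] cv_eq[OF qq(2)] by simp
      next
        assume "q mod t \<noteq> 0" "q' mod t \<noteq> 0"
        then show ?thesis using eq cv_eq[OF qq(1)] cv_eq[OF qq(2)] by simp
      qed
    qed
    show "distinct [0..<5*t]" by simp
  qed
  have adj: "{cyc ! q, cyc ! ((q + 1) mod length cyc)} \<in> H" if q: "q < length cyc" for q
  proof -
    have q5: "q < 5*t" using q len by simp
    define j where "j = q div t"
    define i where "i = q mod t"
    have j: "j < 5" using q5 t1 unfolding j_def by (simp add: div_less_iff_less_mult mult.commute)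
    have i: "i < t" using t1 unfolding i_def by simp
    have qji: "q = j*t + i" unfolding j_def i_def by simp
    have c1: "cyc ! q = enc j i" using q5 by (simp add: cyc_def cv_def j_def i_def)
    have c2: "cyc ! ((q + 1) mod length cyc) = enc j (Suc i)"
    proof (cases "Suc i < t")
      case True
      have "q + 1 < 5*t"
      proof -
        have "q + 1 < j*t + t" using qji True by simp
        also have "\<dots> \<le> 5*t" using j by (metis add.commute mult_Suc le_eq_less_or_eq mult_le_mono1 Suc_leI)
        finally show ?thesis .
      qed
      then have m: "(q+1) mod length cyc = q + 1" using len by simp
      have qe: "q + 1 = Suc i + t*j" using qji by simp
      have "(q+1) div t = j"
      proof -
        have "(q+1) div t = j + Suc i div t" unfolding qe by (rule div_mult_self2) (use t1 in simp)
        then show ?thesis using True by simp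
      qed
      moreover have "(q+1) mod t = Suc i"
      proof -
        have "(q+1) mod t = Suc i mod t" unfolding qe by (rule mod_mult_self2)
        then show ?thesis using True by simp
      qed
      ultimately have "(q+1) div t = j" "(q+1) mod t = Suc i" by auto
      then show ?thesis using m \<open>q + 1 < 5*t\<close> by (simp add: cyc_def cv_def)
    next
      case False
      then have si: "Suc i = t" using i by simp
      have e: "enc j (Suc i) = (j+1) mod 5" using enc_len[of j] j si by (simp add: len_def dst_def)
      have q1: "q + 1 = (j+1)*t" using qji si by simp
      show ?thesis
      proof (cases "j = 4")
        case True
        then have "(q+1) mod length cyc = 0" using q1 len by simp
        moreover have "cyc ! 0 = 0" using t1 by (simp add: cyc_def cv_def src_def)
        ultimately show ?thesis using e True by simp
      next
        case False
        then have j4: "j + 1 < 5" using j by simp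
        have "(j+1)*t < 5*t" using j4 t1 by simp
        then have m: "(q+1) mod length cyc = (j+1)*t" using q1 len by simp
        have "cv ((j+1)*t) = enc (j+1) 0" using t1 by (simp add: cv_def)
        also have "\<dots> = j + 1" using j4 by (simp add: src_def)
        finally show ?thesis using m e j4 \<open>(j+1)*t < 5*t\<close> by (simp add: cyc_def)
      qed
    qed
    have "edge j i \<in> H" using outer j i by blast
    then show ?thesis using c1 c2 by (simp add: edge_def)
  qed
  have "is_cycle H cyc" unfolding is_cycle_def using dist len adj t1 by auto
  then have "girth H \<le> enat (length cyc)" unfolding girth_def by (intro INF_lower) simp
  then show ?thesis using len by simp
qed

end



context constr begin

lemma main_local:
  assumes ms: "is_min_spanner n kk G H" and nv: "NV \<le> n"
  shows "girth H < enat (kk + 2)"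
proof -
  have sp: "is_spanner n kk G H" using ms unfolding is_min_spanner_def by simp
  have sub: "H \<subseteq> G" using sp unfolding is_spanner_def by simp
  have cH: "card H \<le> card H0" using ms H0_spanner unfolding is_min_spanner_def by blast
  have outer: "edge j i \<in> H" if ji: "j < 5" "i < t" for j i
  proof (rule ccontr)
    assume nj: "edge j i \<notin> H"
    define B where "B = (\<lambda>j. {i. i < len j \<and> edge j i \<notin> H})"
    define b where "b = (\<lambda>j. B j \<noteq> {})"
    have finB: "finite (B j)" for j unfolding B_def by simp
    have cardB: "card (B j) \<le> (if b j then 1 else 0)" if j: "j < 10" for j
    proof (cases "b j")
      case True
      have "card (B j) \<le> Suc 0"
      proof (subst card_le_Suc0_iff_eq[OF finB], intro ballI)
        fix p q assume pq: "p \<in> B j" "q \<in> B j"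
        show "p = q"
        proof (rule ccontr)
          assume "p \<noteq> q"
          then consider "p < q" | "q < p" by linarith
          then show False
          proof cases
            case 1 then show False using thread_one[OF sp nv j 1] pq unfolding B_def by auto
          next
            case 2 then show False using thread_one[OF sp nv j 2] pq unfolding B_def by auto
          qed
        qed
      qed
      then show ?thesis using True by simp
    next
      case False then show ?thesis unfolding b_def by simp
    qed
    have inner: "\<not> b m \<and> \<not> b ((m+1) mod 5)" if m: "m < 5" "b (5+m)" for m
    proof -
      obtain p where p: "p < L" "edge (5+m) p \<notin> H" using m unfolding b_def B_def by (auto simp: len_def)
      show ?thesis
      proof (intro conjI notI)
        assume "b m"
        then obtain r where "r < t" "edge m r \<notin> H" using m unfolding b_def B_def by (auto simp: len_def)
        then show False using inner_outer1[OF sp nv m(1) p(1)] p by blast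
      next
        assume "b ((m+1) mod 5)"
        then obtain r where "r < t" "edge ((m+1) mod 5) r \<notin> H" unfolding b_def B_def by (auto simp: len_def)
        then show False using inner_outer2[OF sp nv m(1) p(1)] p by blast
      qed
    qed
    have out3: False if m: "m < 5" "b m" "b ((m+4) mod 5)" "b ((m+1) mod 5)" for m
    proof -
      obtain r where r: "r < t" "edge m r \<notin> H" using m unfolding b_def B_def by (auto simp: len_def)
      obtain r1 where r1: "r1 < t" "edge ((m+4) mod 5) r1 \<notin> H" using m unfolding b_def B_def by (auto simp: len_def)
      obtain r2 where r2: "r2 < t" "edge ((m+1) mod 5) r2 \<notin> H" using m unfolding b_def B_def by (auto simp: len_def)
      show False using outer3[OF sp nv m(1) r(1) r1(1) r2(1) r(2) r1(2) r2(2)] .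
    qed
    have some: "\<exists>j<5. b j" using ji nj unfolding b_def B_def by (auto simp: len_def)
    have sum4: "(\<Sum>j<10. if b j then 1 else 0 :: nat) \<le> 4"
      using comb[of b] inner out3 some by blast
    have "G - H \<subseteq> (\<lambda>(j,i). edge j i) ` (SIGMA j:{..<10}. B j)"
    proof
      fix e assume "e \<in> G - H"
      then obtain j i where "j < 10" "i < len j" "e = edge j i" "edge j i \<notin> H" using G_sub by blast
      then show "e \<in> (\<lambda>(j,i). edge j i) ` (SIGMA j:{..<10}. B j)" unfolding B_def by force
    qed
    then have "card (G - H) \<le> card ((\<lambda>(j,i). edge j i) ` (SIGMA j:{..<10}. B j))"
      by (intro card_mono) (auto simp: finB)
    also have "\<dots> \<le> card (SIGMA j:{..<10}. B j)" by (rule card_image_le) (auto simp: finB)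
    also have "\<dots> = (\<Sum>j<10. card (B j))" by (simp add: finB)
    also have "\<dots> \<le> (\<Sum>j<10. if b j then 1 else 0)" by (intro sum_mono cardB) simp
    also have "\<dots> \<le> 4" by (rule sum4)
    finally have c4: "card (G - H) \<le> 4" .
    have "card G = card H + card (G - H)"
      using sub finite_G by (metis card_Diff_subset card_mono finite_subset le_add_diff_inverse)
    then show False using c4 cH card_H0 by linarith
  qed
  have "girth H \<le> enat (5*t)" using cycle_girth outer by blast
  also have "\<dots> < enat (kk + 2)" using tL t1 by (simp add: kk_def)
  finally show ?thesis .
qed

end

theorem theorem1p6:
  shows "\<exists>c1 c2 :: real. c1 > 0 \<and> c2 > 0 \<and> (\<exists>N :: nat. \<forall>n \<ge> N. \<forall>k :: nat.
           c1 < real k \<and> real k < real n / 3 - c2 \<longrightarrow> \<not> good n k)"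
proof -
  have main: "\<not> good n k" if k: "4 < k" and n: "3*k + 24 < n" for n k :: nat
  proof
    assume g: "good n k"
    define t where "t = (k+1) div 5"
    define L where "L = k + 2 - 3*t"
    have t1: "1 \<le> t" using k by (simp add: t_def)
    have t5: "5*t \<le> k+1" unfolding t_def by simp
    have t5': "k+1 < 5*t + 5" unfolding t_def by linarith
    have tL: "2*t+1 \<le> L" using t5 by (simp add: L_def)
    interpret C: constr t L using t1 tL by unfold_locales
    have kk0: "C.kk = L + 3*t - 2" by (rule C.kk_def)
    have kk: "C.kk = k" using t5 kk0 unfolding L_def by simp
    have nv0: "C.NV = 5 + 5*t + 5*L" by (rule C.NV_def)
    have nv: "C.NV \<le> n" using nv0 t5' t5 n unfolding L_def by simp
    have "is_graph n C.G" using C.is_graph_G nv .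
    then obtain H where H: "is_min_spanner n k C.G H" "girth H \<ge> enat (k+2)" using g unfolding good_def by blast
    have "girth H < enat (k+2)" using C.main_local[of n H] H(1) nv kk by simp
    then show False using H(2) by simp
  qed
  have "\<forall>n \<ge> 0. \<forall>k :: nat. 4 < real k \<and> real k < real n / 3 - 8 \<longrightarrow> \<not> good n k"
  proof (intro allI impI)
    fix n k :: nat assume a: "4 < real k \<and> real k < real n / 3 - 8"
    then have "4 < k" by simp
    moreover have "real (3*k + 24) < real n" using a by simp
    then have "3*k + 24 < n" by (simp only: of_nat_less_iff)
    ultimately show "\<not> good n k" by (rule main)
  qed
  then show ?thesis by (intro exI[of _ "4::real"] exI[of _ "8::real"]) auto
qed


end
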